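(* Let $D_\infty=\mathbb{Z}\rtimes\mathbb{Z}/2\mathbb{Z}=\langle s,t\mid t^2,\ tsts\rangle$ be the infinite dihedral group, and let $\alpha$ and $\beta$ be two minimal continuous actions of $D_\infty$ on an infinite compact Hausdorff space $X$. If $\alpha$ and $\beta$ are continuously orbit equivalent, then they are conjugate.
   Context: Continuous orbit equivalence: two continuous actions $G\curvearrowright X$ and $K\curvearrowright Y$ on compact Hausdorff spaces are continuously orbit equivalent if there is a homeomorphism $\phi:X\to Y$ with inverse $\psi$ and continuous maps $a:G\times X\to K$, $b:K\times Y\to G$ such that $\phi(gx)=a(g,x)\phi(x)$ and $\psi(hy)=b(h,y)\psi(y)$ for all $g\in G$, $h\in K$, $x\in X$, $y\in Y$. Two actions $\alpha,\beta$ of the same group $G$ on $X$ are conjugate if there are a homeomorphism $\phi:X\to X$ and a group automorphism $\tau$ of $G$ with $\phi(\alpha_g x)=\beta_{\tau(g)}(\phi(x))$ for all $g\in G$, $x\in X$. *)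

theory Defs
  imports "HOL-Analysis.Analysis" "HOL-Algebra.Group"
begin

text \<open>The infinite dihedral group as the semidirect product Z x| Z/2Z:
  the pair (n, e) stands for s^n t^e (e = True meaning t^1).
  Then s = (1, False), t = (0, True), and t s^m = s^(-m) t.\<close>

definition dinf_mult :: "int \<times> bool \<Rightarrow> int \<times> bool \<Rightarrow> int \<times> bool" where
  "dinf_mult x y = (if snd x then fst x - fst y else fst x + fst y, snd x \<noteq> snd y)"

definition Dinf :: "(int \<times> bool) monoid" where
  "Dinf = \<lparr>carrier = UNIV, mult = dinf_mult, one = (0, False)\<rparr>"

definition cont_action :: "('g, 'm) monoid_scheme \<Rightarrow> 'a topology \<Rightarrow> ('g \<Rightarrow> 'a \<Rightarrow> 'a) \<Rightarrow> bool" where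
  "cont_action G X \<alpha> \<longleftrightarrow>
     (\<forall>g\<in>carrier G. continuous_map X X (\<alpha> g)) \<and>
     (\<forall>x\<in>topspace X. \<alpha> \<one>\<^bsub>G\<^esub> x = x) \<and>
     (\<forall>g\<in>carrier G. \<forall>h\<in>carrier G. \<forall>x\<in>topspace X. \<alpha> (g \<otimes>\<^bsub>G\<^esub> h) x = \<alpha> g (\<alpha> h x))"

definition minimal_action :: "('g, 'm) monoid_scheme \<Rightarrow> 'a topology \<Rightarrow> ('g \<Rightarrow> 'a \<Rightarrow> 'a) \<Rightarrow> bool" where
  "minimal_action G X \<alpha> \<longleftrightarrow>
     (\<forall>x\<in>topspace X. X closure_of {\<alpha> g x | g. g \<in> carrier G} = topspace X)"

definition cont_orbit_equiv ::
  "('g, 'm) monoid_scheme \<Rightarrow> 'a topology \<Rightarrow> ('g \<Rightarrow> 'a \<Rightarrow> 'a) \<Rightarrow>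
   ('k, 'n) monoid_scheme \<Rightarrow> 'b topology \<Rightarrow> ('k \<Rightarrow> 'b \<Rightarrow> 'b) \<Rightarrow> bool" where
  "cont_orbit_equiv G X \<alpha> K Y \<beta> \<longleftrightarrow>
     (\<exists>\<phi> \<psi> a b.
        homeomorphic_maps X Y \<phi> \<psi> \<and>
        continuous_map (prod_topology (discrete_topology (carrier G)) X)
                       (discrete_topology (carrier K)) (\<lambda>(g, x). a g x) \<and>
        continuous_map (prod_topology (discrete_topology (carrier K)) Y)
                       (discrete_topology (carrier G)) (\<lambda>(h, y). b h y) \<and>
        (\<forall>g\<in>carrier G. \<forall>x\<in>topspace X. \<phi> (\<alpha> g x) = \<beta> (a g x) (\<phi> x)) \<and>
        (\<forall>h\<in>carrier K. \<forall>y\<in>topspace Y. \<psi> (\<beta> h y) = \<alpha> (b h y) (\<psi> y)))"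

definition conjugate_actions ::
  "('g, 'm) monoid_scheme \<Rightarrow> 'a topology \<Rightarrow> ('g \<Rightarrow> 'a \<Rightarrow> 'a) \<Rightarrow> ('g \<Rightarrow> 'a \<Rightarrow> 'a) \<Rightarrow> bool" where
  "conjugate_actions G X \<alpha> \<beta> \<longleftrightarrow>
     (\<exists>\<phi> \<tau>. homeomorphic_map X X \<phi> \<and> \<tau> \<in> iso G G \<and>
        (\<forall>g\<in>carrier G. \<forall>x\<in>topspace X. \<phi> (\<alpha> g x) = \<beta> (\<tau> g) (\<phi> x)))"

end

theory Submission
  imports Defs
begin


notation dinf_mult (infixl "\<star>" 70)

definition dinv :: "int \<times> bool \<Rightarrow> int \<times> bool" where
  "dinv g = (if snd g then fst g else - fst g, snd g)"

lemma dm_assoc: "(a \<star> b) \<star> c = a \<star> (b \<star> c)"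
  by (cases a; cases b; cases c) (auto simp: dinf_mult_def)
lemma dm_one_l[simp]: "(0, False) \<star> a = a"
  by (cases a) (auto simp: dinf_mult_def)
lemma dm_one_r[simp]: "a \<star> (0, False) = a"
  by (cases a) (auto simp: dinf_mult_def)
lemma dm_inv_l[simp]: "dinv a \<star> a = (0, False)"
  by (cases a) (auto simp: dinf_mult_def dinv_def)
lemma dm_inv_r[simp]: "a \<star> dinv a = (0, False)"
  by (cases a) (auto simp: dinf_mult_def dinv_def)
lemma dinv_dinv[simp]: "dinv (dinv a) = a"
  by (cases a) (auto simp: dinv_def)
lemma dm_cancel_l[simp]: "a \<star> b = a \<star> c \<longleftrightarrow> b = c"
  by (cases a; cases b; cases c) (auto simp: dinf_mult_def)
lemma dm_cancel_r[simp]: "b \<star> a = c \<star> a \<longleftrightarrow> b = c"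
  by (cases a; cases b; cases c) (auto simp: dinf_mult_def)
lemma dinv_mult: "dinv (a \<star> b) = dinv b \<star> dinv a"
  by (cases a; cases b) (auto simp: dinf_mult_def dinv_def)
lemma dm_inv_eq: "a \<star> b = c \<longleftrightarrow> b = dinv a \<star> c"
  by (cases a; cases b; cases c) (auto simp: dinf_mult_def dinv_def)
lemma dm_inv_eq2: "a \<star> b = c \<longleftrightarrow> a = c \<star> dinv b"
  by (cases a; cases b; cases c) (auto simp: dinf_mult_def dinv_def)

lemma Dinf_simps[simp]: "carrier Dinf = UNIV" "mult Dinf = dinf_mult" "one Dinf = (0, False)"
  by (auto simp: Dinf_def)

lemma group_Dinf: "group Dinf"
proof (rule groupI)
  fix x assume "x \<in> carrier Dinf"
  show "\<exists>y\<in>carrier Dinf. y \<otimes>\<^bsub>Dinf\<^esub> x = \<one>\<^bsub>Dinf\<^esub>"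
    by (rule bexI[of _ "dinv x"]) auto
qed (auto simp: dm_assoc)

definition tau :: "int \<Rightarrow> int \<times> bool \<Rightarrow> int \<times> bool" where
  "tau j g = (if snd g then fst g + j else fst g, snd g)"

lemma tau_hom: "tau j (a \<star> b) = tau j a \<star> tau j b"
  by (cases a; cases b) (auto simp: tau_def dinf_mult_def)

lemma tau_inv: "tau (-j) (tau j g) = g" "tau j (tau (-j) g) = g"
  by (cases g; auto simp: tau_def)+

lemma bij_tau: "bij (tau j)"
  by (metis bijI' tau_inv)

lemma tau_iso: "tau j \<in> iso Dinf Dinf"
  by (auto simp: iso_def hom_def tau_hom bij_tau)

lemma tau_one[simp]: "tau j (0, False) = (0, False)"
  by (simp add: tau_def)

definition ht :: "int \<times> bool \<Rightarrow> int" where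
  "ht g = (if snd g then - fst g else fst g)"

lemma ht_left: "\<bar>ht (e \<star> g) - ht g\<bar> = \<bar>fst e\<bar>"
  by (cases e; cases g) (auto simp: ht_def dinf_mult_def)

lemma ht_right: "ht (g \<star> c) = (if snd c then - ht g - fst c else ht g + fst c)"
  by (cases c; cases g) (auto simp: ht_def dinf_mult_def)

lemma ht_tau: "ht (tau j g) = (if snd g then ht g - j else ht g)"
  by (cases g) (auto simp: ht_def tau_def)

definition Up :: "int \<Rightarrow> (int \<times> bool) set" where "Up k = {g. k \<le> ht g}"

definition cmm :: "'x set \<Rightarrow> 'x set \<Rightarrow> bool" where
  "cmm A B \<longleftrightarrow> finite (A - B) \<and> finite (B - A)"

definition idx :: "'x set \<Rightarrow> 'x set \<Rightarrow> int" where
  "idx A B = int (card (A - B)) - int (card (B - A))"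

lemma idx_Z:
  assumes "finite Z" "A - B \<subseteq> Z" "B - A \<subseteq> Z"
  shows "idx A B = int (card (A \<inter> Z)) - int (card (B \<inter> Z))"
proof -
  have 1: "A \<inter> Z = (A - B) \<union> (A \<inter> B \<inter> Z)" using assms by auto
  have 2: "B \<inter> Z = (B - A) \<union> (A \<inter> B \<inter> Z)" using assms by auto
  have f: "finite (A - B)" "finite (B - A)" "finite (A \<inter> B \<inter> Z)"
    using assms finite_subset by auto
  have "card (A \<inter> Z) = card (A - B) + card (A \<inter> B \<inter> Z)"
    unfolding 1 by (rule card_Un_disjoint) (use f in auto)
  moreover have "card (B \<inter> Z) = card (B - A) + card (A \<inter> B \<inter> Z)"
    unfolding 2 by (rule card_Un_disjoint) (use f in auto)
  ultimately show ?thesis by (simp add: idx_def)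
qed

lemma cmm_trans': "cmm A B \<Longrightarrow> cmm B C \<Longrightarrow> cmm A C"
proof -
  assume "cmm A B" "cmm B C"
  moreover have "A - C \<subseteq> (A - B) \<union> (B - C)" "C - A \<subseteq> (C - B) \<union> (B - A)" by auto
  ultimately show "cmm A C" unfolding cmm_def by (meson finite_UnI finite_subset)
qed

lemma idx_trans:
  assumes "cmm A B" "cmm B C"
  shows "idx A C = idx A B + idx B C"
proof -
  define Z where "Z = (A - B) \<union> (B - A) \<union> (B - C) \<union> (C - B)"
  have fZ: "finite Z" using assms by (auto simp: cmm_def Z_def)
  have "idx A C = int (card (A \<inter> Z)) - int (card (C \<inter> Z))"
    by (rule idx_Z[OF fZ]) (auto simp: Z_def)
  moreover have "idx A B = int (card (A \<inter> Z)) - int (card (B \<inter> Z))"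
    by (rule idx_Z[OF fZ]) (auto simp: Z_def)
  moreover have "idx B C = int (card (B \<inter> Z)) - int (card (C \<inter> Z))"
    by (rule idx_Z[OF fZ]) (auto simp: Z_def)
  ultimately show ?thesis by simp
qed

lemma cmm_sym: "cmm A B \<Longrightarrow> cmm B A" by (auto simp: cmm_def)
lemma idx_sym: "idx B A = - idx A B" by (simp add: idx_def)
lemma cmm_refl[simp]: "cmm A A" by (simp add: cmm_def)
lemma idx_refl[simp]: "idx A A = 0" by (simp add: idx_def)

lemma compl_diff: "(- A) - (- B) = B - (A :: 'x set)" by auto
lemma cmm_compl: "cmm (- A) (- B) \<longleftrightarrow> cmm A (B :: 'x set)"
  unfolding cmm_def compl_diff by auto
lemma idx_compl: "idx (- A) (- B) = - idx A (B :: 'x set)"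
  unfolding idx_def compl_diff by simp

lemma bij_vimage_card:
  assumes "bij f" shows "card (f -` S) = card S" "finite (f -` S) \<longleftrightarrow> finite S"
proof -
  have "bij_betw f (f -` S) S" using assms
    by (auto simp: bij_betw_def bij_def inj_on_def)
  then show "card (f -` S) = card S" "finite (f -` S) \<longleftrightarrow> finite S"
    by (auto simp: bij_betw_same_card bij_betw_finite)
qed

lemma cmm_vimage: "bij f \<Longrightarrow> cmm (f -` A) (f -` B) \<longleftrightarrow> cmm A B"
  by (simp add: cmm_def vimage_Diff[symmetric] bij_vimage_card)
lemma idx_vimage: "bij f \<Longrightarrow> idx (f -` A) (f -` B) = idx A B"
  by (simp add: idx_def vimage_Diff[symmetric] bij_vimage_card)

lemma Up_step: "Up k - Up (k+1) = {(k, False), (-k, True)}" "Up (k+1) - Up k = {}"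
  by (auto simp: Up_def ht_def split: if_splits)

lemma idx_Up_step: "cmm (Up k) (Up (k+1)) \<and> idx (Up k) (Up (k+1)) = 2"
  by (simp add: cmm_def idx_def Up_step)

lemma idx_Up_nat: "cmm (Up a) (Up (a + int n)) \<and> idx (Up a) (Up (a + int n)) = 2 * int n"
proof (induction n)
  case 0 then show ?case by simp
next
  case (Suc n)
  have e: "a + int (Suc n) = (a + int n) + 1" by simp
  have 1: "cmm (Up a) (Up (a + int n))" "idx (Up a) (Up (a + int n)) = 2 * int n" using Suc by auto
  have 2: "cmm (Up (a + int n)) (Up (a + int n + 1))" "idx (Up (a + int n)) (Up (a + int n + 1)) = 2"
    using idx_Up_step[of "a + int n"] by auto
  show ?case unfolding e using cmm_trans'[OF 1(1) 2(1)] idx_trans[OF 1(1) 2(1)] 1(2) 2(2) by simp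
qed

lemma idx_Up: "cmm (Up a) (Up b) \<and> idx (Up a) (Up b) = 2 * (b - a)"
proof (cases "a \<le> b")
  case True
  then obtain n where "b = a + int n" using zle_iff_zadd by blast
  then show ?thesis using idx_Up_nat[of a n] by simp
next
  case False
  then have "b \<le> a" by simp
  then obtain n where "a = b + int n" using zle_iff_zadd by blast
  then show ?thesis using idx_Up_nat[of b n] cmm_sym[of "Up b" "Up a"] idx_sym[of "Up b" "Up a"] by simp
qed

lemma tau_Up: assumes "j \<in> {0, 1}"
  shows "cmm (Up k) (tau j -` Up k) \<and> idx (Up k) (tau j -` Up k) = j"
proof -
  have h1: "Up k - tau j -` Up k = (if j = 1 then {(-k, True)} else {})"
    and h2: "tau j -` Up k - Up k = {}"
    using assms by (auto simp: Up_def ht_tau ht_def tau_def split: if_splits)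
  show ?thesis using assms unfolding cmm_def idx_def h1 h2 by auto
qed

definition RS :: "int \<times> bool \<Rightarrow> (int \<times> bool) set" where
  "RS c = {q. 0 \<le> ht (q \<star> c)}"

lemma RS_eq: "RS c = (if snd c then - Up (1 - fst c) else Up (- fst c))"
  by (auto simp: RS_def Up_def ht_right)

definition good :: "int \<Rightarrow> (int \<times> bool) set \<Rightarrow> int \<times> bool \<Rightarrow> bool" where
  "good j K c \<longleftrightarrow> cmm K (tau j -` RS c) \<and> idx K (tau j -` RS c) = 0"

lemma Up_inter_infinite: "infinite (Up a \<inter> Up b)"
proof
  assume "finite (Up a \<inter> Up b)"
  moreover have "(\<lambda>n. (max a b + int n, False)) ` UNIV \<subseteq> Up a \<inter> Up b"
    by (auto simp: Up_def ht_def)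
  moreover have "inj (\<lambda>n::nat. (max a b + int n, False))" by (auto simp: inj_def)
  ultimately show False
    by (meson finite_imageD finite_subset infinite_UNIV_nat)
qed

lemma not_cmm_Up_compl: "\<not> cmm (Up a) (- Up b)"
  using Up_inter_infinite[of a b] by (auto simp: cmm_def Diff_eq)

lemma good_unique:
  assumes "good j K c1" "good j K c2" shows "c1 = c2"
proof -
  have c: "cmm (tau j -` RS c1) (tau j -` RS c2)" and i: "idx (tau j -` RS c1) (tau j -` RS c2) = 0"
  proof -
    have g1: "cmm K (tau j -` RS c1)" "idx K (tau j -` RS c1) = 0"
      and g2: "cmm K (tau j -` RS c2)" "idx K (tau j -` RS c2) = 0"
      using assms unfolding good_def by auto
    show "cmm (tau j -` RS c1) (tau j -` RS c2)" using cmm_trans'[OF cmm_sym[OF g1(1)] g2(1)] .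
    show "idx (tau j -` RS c1) (tau j -` RS c2) = 0"
      using idx_trans[OF cmm_sym[OF g1(1)] g2(1)] idx_sym[of K] g1(2) g2(2) by simp
  qed
  then have c': "cmm (RS c1) (RS c2)" and i': "idx (RS c1) (RS c2) = 0"
    by (simp_all add: cmm_vimage idx_vimage bij_tau)
  obtain m1 e1 m2 e2 where cs: "c1 = (m1, e1)" "c2 = (m2, e2)" by fastforce
  have RS1: "RS c1 = (if e1 then - Up (1 - m1) else Up (- m1))" using cs by (simp add: RS_eq)
  have RS2: "RS c2 = (if e2 then - Up (1 - m2) else Up (- m2))" using cs by (simp add: RS_eq)
  show ?thesis
  proof (cases e1)
    case T1: True
    show ?thesis
    proof (cases e2)
      case True
      have "idx (- Up (1 - m1)) (- Up (1 - m2)) = 0" using i' RS1 RS2 T1 True by simp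
      then have "2 * ((1 - m2) - (1 - m1)) = 0" using idx_compl[of "Up (1 - m1)" "Up (1 - m2)"] idx_Up[of "1 - m1" "1 - m2"] by simp
      then show ?thesis using cs T1 True by simp
    next
      case False
      have "cmm (- Up (1 - m1)) (Up (- m2))" using c' RS1 RS2 T1 False by simp
      then show ?thesis using not_cmm_Up_compl cmm_sym by blast
    qed
  next
    case F1: False
    show ?thesis
    proof (cases e2)
      case False
      have "idx (Up (- m1)) (Up (- m2)) = 0" using i' RS1 RS2 F1 False by simp
      then have "2 * ((- m2) - (- m1)) = 0" using idx_Up[of "- m1" "- m2"] by simp
      then show ?thesis using cs F1 False by simp
    next
      case True
      have "cmm (Up (- m1)) (- Up (1 - m2))" using c' RS1 RS2 F1 True by simp
      then show ?thesis using not_cmm_Up_compl by blast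
    qed
  qed
qed



lemma good_exists_Up:
  assumes "cmm K (Up 0)" shows "\<exists>j\<in>{0,1}. \<exists>c. good j K c"
proof -
  define N where "N = idx K (Up 0)"
  define j where "j = N mod 2"
  define m where "m = (N + j) div 2"
  have j01: "j \<in> {0, 1}" unfolding j_def by auto
  have ev: "2 * m = N + j" unfolding m_def j_def by presburger
  have RSc: "RS (m, False) = Up (- m)" by (simp add: RS_eq)
  have c1: "cmm (Up 0) (Up (- m))" "idx (Up 0) (Up (- m)) = - 2 * m" using idx_Up[of 0 "- m"] by auto
  have c2: "cmm (Up (- m)) (tau j -` Up (- m))" "idx (Up (- m)) (tau j -` Up (- m)) = j"
    using tau_Up[OF j01, of "- m"] by auto
  have c12: "cmm (Up 0) (tau j -` Up (- m))" using cmm_trans'[OF c1(1) c2(1)] .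
  have "cmm K (tau j -` Up (- m))" using cmm_trans'[OF assms c12] .
  moreover have "idx K (tau j -` Up (- m)) = N - 2 * m + j"
    using idx_trans[OF assms c12] idx_trans[OF c1(1) c2(1)] c1(2) c2(2) N_def by simp
  ultimately have "good j K (m, False)" unfolding good_def RSc using ev by simp
  then show ?thesis using j01 by blast
qed

lemma good_exists_Dn:
  assumes "cmm K (- Up 0)" shows "\<exists>j\<in>{0,1}. \<exists>c. good j K c"
proof -
  define N where "N = idx K (- Up 0)"
  define j where "j = N mod 2"
  define k where "k = (N - j) div 2"
  have j01: "j \<in> {0, 1}" unfolding j_def by auto
  have ev: "2 * k = N - j" unfolding k_def j_def by presburger
  have RSc: "RS (1 - k, True) = - Up k" by (simp add: RS_eq)
  have vc: "tau j -` (- Up k) = - (tau j -` Up k)" by auto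
  have c1: "cmm (- Up 0) (- Up k)" "idx (- Up 0) (- Up k) = - 2 * k"
    using idx_Up[of 0 k] by (auto simp: cmm_compl idx_compl)
  have c2: "cmm (- Up k) (- (tau j -` Up k))" "idx (- Up k) (- (tau j -` Up k)) = - j"
    using tau_Up[OF j01, of k] by (auto simp: cmm_compl idx_compl)
  have c12: "cmm (- Up 0) (- (tau j -` Up k))" using cmm_trans'[OF c1(1) c2(1)] .
  have "cmm K (- (tau j -` Up k))" using cmm_trans'[OF assms c12] .
  moreover have "idx K (- (tau j -` Up k)) = N - 2 * k - j"
    using idx_trans[OF assms c12] idx_trans[OF c1(1) c2(1)] c1(2) c2(2) N_def by simp
  ultimately have "good j K (1 - k, True)" unfolding good_def RSc vc using ev by simp
  then show ?thesis using j01 by blast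
qed

lemma bij_rmult: "bij (\<lambda>g. g \<star> c)"
proof (rule bijI')
  fix x y show "(x \<star> c = y \<star> c) = (x = y)" by simp
next
  fix y show "\<exists>x. y = x \<star> c" by (rule exI[of _ "y \<star> dinv c"]) (simp add: dm_assoc)
qed

lemma bij_Q: "bij (\<lambda>g. tau j g \<star> c)"
proof -
  have "(\<lambda>g. tau j g \<star> c) = (\<lambda>g. g \<star> c) \<circ> tau j" by auto
  then show ?thesis using bij_comp[OF bij_tau bij_rmult] by metis
qed

lemma transfer_V:
  assumes P: "bij P" and Q: "bij Q"
    and c: "cmm (P -` Up 0) (Q -` Up 0)" and i: "idx (P -` Up 0) (Q -` Up 0) = 0"
  shows "cmm (P -` Up k) (Q -` Up k) \<and> idx (P -` Up k) (Q -` Up k) = 0"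
    "cmm (P -` (- Up k)) (Q -` (- Up k)) \<and> idx (P -` (- Up k)) (Q -` (- Up k)) = 0"
proof -
  have a1: "cmm (P -` Up k) (P -` Up 0)" "idx (P -` Up k) (P -` Up 0) = idx (Up k) (Up 0)"
    using idx_Up[of k 0] by (simp_all add: cmm_vimage idx_vimage P)
  have a3: "cmm (Q -` Up 0) (Q -` Up k)" "idx (Q -` Up 0) (Q -` Up k) = idx (Up 0) (Up k)"
    using idx_Up[of 0 k] by (simp_all add: cmm_vimage idx_vimage Q)
  have b: "cmm (P -` Up k) (Q -` Up 0)" using cmm_trans'[OF a1(1) c] .
  have cc: "cmm (P -` Up k) (Q -` Up k)" using cmm_trans'[OF b a3(1)] .
  have ii: "idx (P -` Up k) (Q -` Up k) = 0"
    using idx_trans[OF b a3(1)] idx_trans[OF a1(1) c] a1(2) a3(2) i idx_sym[of "Up k" "Up 0"] by simp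
  show "cmm (P -` Up k) (Q -` Up k) \<and> idx (P -` Up k) (Q -` Up k) = 0" using cc ii by simp
  show "cmm (P -` (- Up k)) (Q -` (- Up k)) \<and> idx (P -` (- Up k)) (Q -` (- Up k)) = 0"
    using cc ii by (simp add: vimage_Compl cmm_compl idx_compl)
qed

lemma good_transfer:
  assumes P: "bij P" and g: "good j (P -` Up 0) c"
  shows "good j ((\<lambda>g'. P (g' \<star> g) \<star> w) -` Up 0) (tau j g \<star> c \<star> w)"
proof -
  define Q where "Q = (\<lambda>g. tau j g \<star> c)"
  define \<rho> where "\<rho> = (\<lambda>g'. g' \<star> g)"
  have bQ: "bij Q" unfolding Q_def by (rule bij_Q)
  have br: "bij \<rho>" unfolding \<rho>_def by (rule bij_rmult)
  have eQ: "tau j -` RS c = Q -` Up 0" by (auto simp: Q_def RS_def Up_def)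
  have c: "cmm (P -` Up 0) (Q -` Up 0)" "idx (P -` Up 0) (Q -` Up 0) = 0"
    using g unfolding good_def eQ by auto
  have V: "cmm (P -` RS w) (Q -` RS w) \<and> idx (P -` RS w) (Q -` RS w) = 0"
    using transfer_V[OF P bQ c] by (simp add: RS_eq)
  have e1: "(\<lambda>g'. P (g' \<star> g) \<star> w) -` Up 0 = \<rho> -` (P -` RS w)"
    by (auto simp: \<rho>_def RS_def Up_def)
  have e2: "tau j -` RS (tau j g \<star> c \<star> w) = \<rho> -` (Q -` RS w)"
    by (auto simp: \<rho>_def RS_def Q_def tau_hom dm_assoc)
  show ?thesis unfolding good_def e1 e2 using V by (simp add: cmm_vimage idx_vimage br)
qed

lemma infinite_Up: "infinite (Up k)"
  using Up_inter_infinite[of k k] by simp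

lemma infinite_Dn: "infinite (- Up k)"
proof
  assume "finite (- Up k)"
  moreover have "(\<lambda>n. (k - 1 - int n, False)) ` UNIV \<subseteq> - Up k"
    by (auto simp: Up_def ht_def)
  moreover have "inj (\<lambda>n::nat. (k - 1 - int n, False))" by (auto simp: inj_def)
  ultimately show False
    by (meson finite_imageD finite_subset infinite_UNIV_nat)
qed

lemma finite_strip: "finite {g. \<bar>ht g\<bar> < R}"
proof -
  have "{g. \<bar>ht g\<bar> < R} \<subseteq> {-R..R} \<times> UNIV" by (auto simp: ht_def split: if_splits)
  then show ?thesis by (rule finite_subset) auto
qed

locale strct =
  fixes P Pi :: "int \<times> bool \<Rightarrow> int \<times> bool" and M R0 :: int
  assumes inv1: "\<And>g. Pi (P g) = g" and inv2: "\<And>p. P (Pi p) = p"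
    and step: "\<And>g u. u \<in> {(1, False), (0, True)} \<Longrightarrow> \<bar>ht (P (u \<star> g)) - ht (P g)\<bar> \<le> M"
    and band: "\<And>p. 0 \<le> ht p \<Longrightarrow> ht p < M \<Longrightarrow> \<bar>ht (Pi p)\<bar> \<le> R0"
    and R0nn: "0 \<le> R0"
begin

definition "R = R0 + 2"
definition "K = P -` Up 0"
definition "orn = ((R, False) \<in> K)"

lemma bijP: "bij P" by (metis bijI' inv1 inv2)

lemma boundary:
  assumes u: "u \<in> {(1, False), (0, True)}" and d: "(g \<in> K) \<noteq> (u \<star> g \<in> K)"
  shows "\<bar>ht g\<bar> \<le> R0 + 1"
proof (cases "g \<in> K")
  case True
  then have "0 \<le> ht (P g)" "ht (P (u \<star> g)) < 0" using d by (auto simp: K_def Up_def)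
  moreover have "\<bar>ht (P (u \<star> g)) - ht (P g)\<bar> \<le> M" by (rule step[OF u])
  ultimately have "ht (P g) < M" by linarith
  then have "\<bar>ht (Pi (P g))\<bar> \<le> R0" using band \<open>0 \<le> ht (P g)\<close> by blast
  then show ?thesis using inv1 by simp
next
  case False
  then have "0 \<le> ht (P (u \<star> g))" "ht (P g) < 0" using d by (auto simp: K_def Up_def)
  moreover have "\<bar>ht (P (u \<star> g)) - ht (P g)\<bar> \<le> M" by (rule step[OF u])
  ultimately have "ht (P (u \<star> g)) < M" by linarith
  then have "\<bar>ht (Pi (P (u \<star> g)))\<bar> \<le> R0" using band \<open>0 \<le> ht (P (u \<star> g))\<close> by blast
  then have "\<bar>ht (u \<star> g)\<bar> \<le> R0" using inv1 by simp
  moreover have "\<bar>ht (u \<star> g) - ht g\<bar> \<le> 1" using ht_left[of u g] u by auto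
  ultimately show ?thesis by linarith
qed

lemma no_boundary:
  assumes u: "u \<in> {(1, False), (0, True)}" and "R \<le> \<bar>ht g\<bar>"
  shows "(g \<in> K) = (u \<star> g \<in> K)"
  using boundary[OF u] assms(2) unfolding R_def by fastforce

lemma up_const_nat: "((R + int k, False) \<in> K) = ((R, False) \<in> K)"
proof (induction k)
  case 0 then show ?case by simp
next
  case (Suc k)
  have "R \<le> \<bar>ht (R + int k, False)\<bar>" by (simp add: ht_def R_def)
  then have "((R + int k, False) \<in> K) = ((1, False) \<star> (R + int k, False) \<in> K)"
    by (intro no_boundary) auto
  moreover have "(1, False) \<star> (R + int k, False) = (R + int (Suc k), False)"
    by (simp add: dinf_mult_def)
  ultimately show ?case using Suc by simp
qed

lemma dn_const_nat: "((- R - int k, False) \<in> K) = ((- R, False) \<in> K)"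
proof (induction k)
  case 0 then show ?case by simp
next
  case (Suc k)
  have "R \<le> \<bar>ht (- R - int (Suc k), False)\<bar>" by (simp add: ht_def R_def)
  then have "((- R - int (Suc k), False) \<in> K) = ((1, False) \<star> (- R - int (Suc k), False) \<in> K)"
    by (intro no_boundary) auto
  moreover have "(1, False) \<star> (- R - int (Suc k), False) = (- R - int k, False)"
    by (simp add: dinf_mult_def)
  ultimately show ?case using Suc by simp
qed

lemma sheetT: assumes "R \<le> \<bar>m\<bar>" shows "((m, True) \<in> K) = ((- m, False) \<in> K)"
proof -
  have "R \<le> \<bar>ht (- m, False)\<bar>" using assms by (simp add: ht_def)
  then have "((- m, False) \<in> K) = ((0, True) \<star> (- m, False) \<in> K)"
    by (intro no_boundary) auto
  moreover have "(0, True) \<star> (- m, False) = (m, True)" by (simp add: dinf_mult_def)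
  ultimately show ?thesis by simp
qed

lemma far_up: assumes "R \<le> ht g" shows "(g \<in> K) = orn"
proof -
  obtain m e where g: "g = (m, e)" by fastforce
  show ?thesis
  proof (cases e)
    case False
    then have "R \<le> m" using assms g by (simp add: ht_def)
    then obtain k where "m = R + int k" using zle_iff_zadd by blast
    then show ?thesis using up_const_nat[of k] g False by (simp add: orn_def)
  next
    case True
    then have "R \<le> - m" using assms g by (simp add: ht_def)
    then obtain k where k: "- m = R + int k" using zle_iff_zadd by blast
    have "(g \<in> K) = ((- m, False) \<in> K)" using sheetT[of m] g True \<open>R \<le> - m\<close> by simp
    then show ?thesis using up_const_nat[of k] k by (simp add: orn_def)
  qed
qed

lemma far_dn: assumes "ht g \<le> - R" shows "(g \<in> K) = ((- R, False) \<in> K)"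
proof -
  obtain m e where g: "g = (m, e)" by fastforce
  show ?thesis
  proof (cases e)
    case False
    then have "m \<le> - R" using assms g by (simp add: ht_def)
    then obtain k where "- R - m = int k" using nonneg_int_cases[of "- R - m"] by auto
    then have "m = - R - int k" by simp
    then show ?thesis using dn_const_nat[of k] g False by simp
  next
    case True
    then have "- m \<le> - R" using assms g by (simp add: ht_def)
    then have R0: "R \<le> m" by simp
    then have "R \<le> \<bar>m\<bar>" by simp
    have "- m \<le> - R" by fact
    then obtain k where "- R - (- m) = int k" using nonneg_int_cases[of "- R - (- m)"] by auto
    then have k: "- m = - R - int k" by simp
    have "(g \<in> K) = ((- m, False) \<in> K)" using sheetT[OF \<open>R \<le> \<bar>m\<bar>\<close>] g True by simp
    then show ?thesis using dn_const_nat[of k] k by simp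
  qed
qed

lemma opp: "((- R, False) \<in> K) = (\<not> orn)"
proof (rule ccontr)
  assume a: "((- R, False) \<in> K) \<noteq> (\<not> orn)"
  define B where "B = {g. \<bar>ht g\<bar> < R}"
  have fB: "finite B" unfolding B_def by (rule finite_strip)
  have far: "g \<in> K \<longleftrightarrow> orn" if "g \<notin> B" for g
  proof (cases "0 \<le> ht g")
    case True
    then have "R \<le> ht g" using that by (auto simp: B_def)
    then show ?thesis using far_up by simp
  next
    case False
    then have "ht g \<le> - R" using that by (auto simp: B_def)
    then show ?thesis using far_dn a by auto
  qed
  show False
  proof (cases orn)
    case True
    then have "- K \<subseteq> B" using far by auto
    then have "finite (P -` (- Up 0))" using fB by (simp add: K_def vimage_Compl finite_subset)
    then show False using bij_vimage_card(2)[OF bijP] infinite_Dn by blast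
  next
    case False
    then have "K \<subseteq> B" using far by auto
    then have "finite (P -` Up 0)" using fB by (simp add: K_def finite_subset)
    then show False using bij_vimage_card(2)[OF bijP] infinite_Up by blast
  qed
qed

lemma struct_far: assumes "R \<le> \<bar>ht g\<bar>" shows "(g \<in> K) = (if 0 \<le> ht g then orn else \<not> orn)"
proof (cases "0 \<le> ht g")
  case True then show ?thesis using far_up assms by simp
next
  case False then show ?thesis using far_dn[of g] opp assms by simp
qed

lemma struct_cmm: "if orn then cmm K (Up 0) else cmm K (- Up 0)"
proof -
  define B where "B = {g. \<bar>ht g\<bar> < R}"
  have fB: "finite B" unfolding B_def by (rule finite_strip)
  have far: "\<And>g. g \<notin> B \<Longrightarrow> (g \<in> K) = (if 0 \<le> ht g then orn else \<not> orn)"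
    using struct_far by (simp add: B_def not_less)
  show ?thesis
  proof (cases orn)
    case True
    then have far': "\<And>g. g \<notin> B \<Longrightarrow> (g \<in> K) = (g \<in> Up 0)" using far by (simp add: Up_def)
    have "K - Up 0 \<subseteq> B" "Up 0 - K \<subseteq> B" using far' by blast+
    then show ?thesis using True fB by (simp add: cmm_def finite_subset)
  next
    case False
    then have far': "\<And>g. g \<notin> B \<Longrightarrow> (g \<in> K) = (g \<in> - Up 0)" using far by (simp add: Up_def)
    have "K - (- Up 0) \<subseteq> B" "(- Up 0) - K \<subseteq> B" using far' by blast+
    then show ?thesis using False fB by (simp add: cmm_def finite_subset)
  qed
qed

lemma struct_good: "\<exists>j\<in>{0,1}. \<exists>c. good j K c"
  using struct_cmm good_exists_Up good_exists_Dn by (cases orn) auto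

end

lemma strct_window:
  assumes "strct P Pi1 M R0" "strct P' Pi2 M R0"
    and "\<And>g. \<bar>ht g\<bar> < R0 + 2 \<or> g = (R0 + 2, False) \<Longrightarrow> (0 \<le> ht (P g)) = (0 \<le> ht (P' g))"
  shows "P -` Up 0 = P' -` Up 0"
proof -
  interpret A: strct P Pi1 M R0 by fact
  interpret B: strct P' Pi2 M R0 by fact
  have RR: "A.R = R0 + 2" "B.R = R0 + 2" by (simp_all add: A.R_def B.R_def)
  have o: "A.orn = B.orn" using assms(3)[of "(R0 + 2, False)"]
    by (simp add: A.orn_def B.orn_def A.K_def B.K_def RR Up_def)
  have "(g \<in> P -` Up 0) = (g \<in> P' -` Up 0)" for g
    proof (cases "\<bar>ht g\<bar> < R0 + 2")
      case True then show ?thesis using assms(3)[of g] by (simp add: Up_def)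
    next
      case False
      then show ?thesis using A.struct_far[of g] B.struct_far[of g] o
        by (simp add: RR A.K_def B.K_def)
    qed
  then show ?thesis by blast
qed



lemma conj_refl_snd: "snd (dinv g \<star> (m, True) \<star> g)"
  by (cases g) (auto simp: dinf_mult_def dinv_def)

lemma conj_refl_eq: "dinv g \<star> (m, True) \<star> g = (m, True) \<Longrightarrow> g = (0, False) \<or> g = (m, True)"
  by (cases g) (auto simp: dinf_mult_def dinv_def split: if_splits)

locale minact =
  fixes X :: "'a topology" and \<alpha> :: "int \<times> bool \<Rightarrow> 'a \<Rightarrow> 'a"
  assumes cpt: "compact_space X" and hd: "Hausdorff_space X" and infX: "infinite (topspace X)"
    and act: "cont_action Dinf X \<alpha>" and mini: "minimal_action Dinf X \<alpha>"
begin

lemma cont: "continuous_map X X (\<alpha> g)" using act unfolding cont_action_def Dinf_simps ball_UNIV by blast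
lemma one[simp]: "x \<in> topspace X \<Longrightarrow> \<alpha> (0, False) x = x" using act unfolding cont_action_def Dinf_simps ball_UNIV by blast
lemma mult: "x \<in> topspace X \<Longrightarrow> \<alpha> (g \<star> h) x = \<alpha> g (\<alpha> h x)" using act unfolding cont_action_def Dinf_simps ball_UNIV by blast
lemma inX[simp]: "x \<in> topspace X \<Longrightarrow> \<alpha> g x \<in> topspace X"
  using cont[of g] by (simp add: continuous_map_def Pi_iff)
lemma inv_l[simp]: "x \<in> topspace X \<Longrightarrow> \<alpha> (dinv g) (\<alpha> g x) = x"
  by (metis mult dm_inv_l one)
lemma inv_r[simp]: "x \<in> topspace X \<Longrightarrow> \<alpha> g (\<alpha> (dinv g) x) = x"
  by (metis mult dm_inv_r one)

lemma dense: "x \<in> topspace X \<Longrightarrow> X closure_of (range (\<lambda>g. \<alpha> g x)) = topspace X"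
proof -
  assume x: "x \<in> topspace X"
  have "{\<alpha> g x |g. g \<in> carrier Dinf} = range (\<lambda>g. \<alpha> g x)" by auto
  moreover have c: "X closure_of {\<alpha> g x |g. g \<in> carrier Dinf} = topspace X"
    using mini x unfolding minimal_action_def by blast
  ultimately show ?thesis by simp
qed

lemma hits: "x \<in> topspace X \<Longrightarrow> openin X V \<Longrightarrow> V \<noteq> {} \<Longrightarrow> \<exists>g. \<alpha> g x \<in> V"
  using dense[of x] by (auto simp: dense_intersects_open)

lemma t1: "t1_space X" using hd by (rule Hausdorff_imp_t1_space)

lemma topspace_ne: "topspace X \<noteq> {}" using infX by auto

lemma orbit_inf:
  assumes x: "x \<in> topspace X" and U: "openin X U" "U \<noteq> {}"
  shows "infinite (range (\<lambda>g. \<alpha> g x) \<inter> U)"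
proof
  assume fin: "finite (range (\<lambda>g. \<alpha> g x) \<inter> U)"
  define S where "S = range (\<lambda>g. \<alpha> g x) \<inter> U"
  have UX: "U \<subseteq> topspace X" using U openin_subset by blast
  have "closedin X S" using t1 fin UX unfolding S_def t1_space_closedin_finite by blast
  then have oUS: "openin X (U - S)" using U by (simp add: openin_diff)
  have "U - S = {}"
  proof (rule ccontr)
    assume "U - S \<noteq> {}"
    then obtain g where "\<alpha> g x \<in> U - S" using hits[OF x oUS] by blast
    then show False by (auto simp: S_def)
  qed
  then have "U \<subseteq> S" by blast
  then have fU: "finite U" using finite_subset fin unfolding S_def by blast
  obtain p where p: "p \<in> U" using U by blast
  have "closedin X (U - {p})" using t1 fU UX unfolding t1_space_closedin_finite by blast
  then have "openin X (U - (U - {p}))" using U by (simp add: openin_diff)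
  moreover have "U - (U - {p}) = {p}" using p by auto
  ultimately have op: "openin X {p}" by simp
  have pX: "p \<in> topspace X" using p UX by blast
  have allop: "openin X {y}" if y: "y \<in> topspace X" for y
  proof -
    obtain g where g: "\<alpha> g y \<in> {p}" using hits[OF y op] by blast
    have "{z \<in> topspace X. \<alpha> g z \<in> {p}} = {y}"
    proof
      show "{z \<in> topspace X. \<alpha> g z \<in> {p}} \<subseteq> {y}"
      proof
        fix z assume "z \<in> {z \<in> topspace X. \<alpha> g z \<in> {p}}"
        then have z: "z \<in> topspace X" "\<alpha> g z = p" by auto
        have "z = \<alpha> (dinv g) (\<alpha> g z)" using z(1) by simp
        also have "\<dots> = \<alpha> (dinv g) (\<alpha> g y)" using z g by simp
        also have "\<dots> = y" using y by simp
        finally show "z \<in> {y}" by simp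
      qed
      show "{y} \<subseteq> {z \<in> topspace X. \<alpha> g z \<in> {p}}" using y g by simp
    qed
    moreover have "openin X {z \<in> topspace X. \<alpha> g z \<in> {p}}"
      by (rule openin_continuous_map_preimage[OF cont op])
    ultimately show ?thesis by simp
  qed
  obtain \<F> where F: "finite \<F>" "\<F> \<subseteq> (\<lambda>y. {y}) ` topspace X" "topspace X \<subseteq> \<Union>\<F>"
    using cpt unfolding compact_space_alt
    by (erule_tac x="(\<lambda>y. {y}) ` topspace X" in allE) (auto simp: allop)
  have "finite (\<Union>\<F>)" using F by (auto intro: finite_Union)
  then show False using F(3) infX finite_subset by blast
qed

lemma fix_pow_nat:
  assumes x: "x \<in> topspace X" and f: "\<alpha> (n, False) x = x"
  shows "\<alpha> (int k * n, False) x = x"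
proof (induction k)
  case 0 then show ?case using x by simp
next
  case (Suc k)
  have "(int (Suc k) * n, False) = (n, False) \<star> (int k * n, False)"
    by (simp add: dinf_mult_def algebra_simps)
  then show ?case using Suc x f by (simp add: mult)
qed

lemma fix_pow_int:
  assumes x: "x \<in> topspace X" and f: "\<alpha> (n, False) x = x"
  shows "\<alpha> (q * n, False) x = x"
proof (cases "0 \<le> q")
  case True
  then obtain k where "q = int k" using nonneg_int_cases by blast
  then show ?thesis using fix_pow_nat[OF x f] by simp
next
  case False
  have f': "\<alpha> (- n, False) x = x"
  proof -
    have "\<alpha> (dinv (n, False)) (\<alpha> (n, False) x) = x" using x by simp
    then show ?thesis using f by (simp add: dinv_def)
  qed
  have "0 \<le> - q" using False by simp
  then obtain k where "- q = int k" using nonneg_int_cases by blast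
  then have q: "q = - int k" by linarith
  have "q * n = int k * (- n)" by (simp add: q)
  then show ?thesis using fix_pow_nat[OF x f'] by simp
qed

lemma free_transl_pos:
  assumes x: "x \<in> topspace X" and n: "0 < n" shows "\<alpha> (n, False) x \<noteq> x"
proof
  assume f: "\<alpha> (n, False) x = x"
  have sub: "range (\<lambda>g. \<alpha> g x) \<subseteq> (\<lambda>g. \<alpha> g x) ` ({0..<n} \<times> UNIV)"
  proof
    fix y assume "y \<in> range (\<lambda>g. \<alpha> g x)"
    then obtain m e where y: "y = \<alpha> (m, e) x" by auto
    define q r where "q = m div n" and "r = m mod n"
    have mqr: "m = r + q * n" unfolding q_def r_def by simp
    have r: "r \<in> {0..<n}" unfolding r_def using n by simp
    show "y \<in> (\<lambda>g. \<alpha> g x) ` ({0..<n} \<times> UNIV)"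
    proof (cases e)
      case False
      have "(m, e) = (r, False) \<star> (q * n, False)" using False mqr by (simp add: dinf_mult_def)
      then have "y = \<alpha> (r, False) x" using y x fix_pow_int[OF x f, of q] by (simp add: mult)
      then show ?thesis using r by auto
    next
      case True
      have "(m, e) = (r, True) \<star> (- q * n, False)" using True mqr by (simp add: dinf_mult_def)
      then have "y = \<alpha> (r, True) x" using y x fix_pow_int[OF x f, of "- q"] by (simp add: mult)
      then show ?thesis using r by auto
    qed
  qed
  have "finite ((\<lambda>g. \<alpha> g x) ` ({0..<n} \<times> (UNIV :: bool set)))" by simp
  then have "finite (range (\<lambda>g. \<alpha> g x) \<inter> topspace X)" using sub by (meson finite_Int finite_subset)
  then show False using orbit_inf[OF x openin_topspace topspace_ne] by simp
qed

lemma free_transl: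
  assumes x: "x \<in> topspace X" and n: "n \<noteq> 0" shows "\<alpha> (n, False) x \<noteq> x"
proof (cases "0 < n")
  case True then show ?thesis using free_transl_pos[OF x] by simp
next
  case False
  then have n': "0 < - n" using n by simp
  show ?thesis
  proof
    assume f: "\<alpha> (n, False) x = x"
    have "\<alpha> (dinv (n, False)) (\<alpha> (n, False) x) = x" using x by simp
    then have "\<alpha> (- n, False) x = x" using f by (simp add: dinv_def)
    then show False using free_transl_pos[OF x n'] by simp
  qed
qed

definition Fx :: "int \<times> bool \<Rightarrow> 'a set" where "Fx w = {x \<in> topspace X. \<alpha> w x = x}"

lemma Fx_closed: "closedin X (Fx w)"
  unfolding Fx_def using closedin_continuous_maps_eq[OF hd cont[of w] continuous_map_id] by simp

lemma Fx_nowhere: assumes w: "w \<noteq> (0, False)" shows "X interior_of Fx w = {}"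
proof -
  obtain m e where we: "w = (m, e)" by fastforce
  show ?thesis
  proof (cases e)
    case False
    then have "m \<noteq> 0" using w we by simp
    then have "Fx w = {}" using free_transl we False by (auto simp: Fx_def)
    then show ?thesis by simp
  next
    case True
    show ?thesis
    proof (rule ccontr)
      assume "X interior_of Fx w \<noteq> {}"
      then obtain x where xU: "x \<in> X interior_of Fx w" by blast
      define U where "U = X interior_of Fx w"
      have oU: "openin X U" "U \<noteq> {}" using xU by (auto simp: U_def)
      have UF: "U \<subseteq> Fx w" unfolding U_def by (rule interior_of_subset)
      have x: "x \<in> topspace X" "\<alpha> w x = x" using xU UF by (auto simp: U_def Fx_def)
      have "range (\<lambda>g. \<alpha> g x) \<inter> U \<subseteq> {x, \<alpha> (m, True) x}"
      proof
        fix y assume "y \<in> range (\<lambda>g. \<alpha> g x) \<inter> U"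
        then obtain g where g: "y = \<alpha> g x" "\<alpha> g x \<in> U" by auto
        then have fy: "\<alpha> w (\<alpha> g x) = \<alpha> g x" using UF by (auto simp: Fx_def)
        define v where "v = dinv g \<star> w \<star> g"
        have vx: "\<alpha> v x = x"
        proof -
          have "\<alpha> v x = \<alpha> (dinv g) (\<alpha> w (\<alpha> g x))" using x by (simp add: v_def mult)
          also have "\<dots> = x" using fy x by simp
          finally show ?thesis .
        qed
        have sv: "snd v" using conj_refl_snd[of g m] by (simp add: v_def we True)
        have "\<alpha> (w \<star> v) x = x" using x vx by (simp add: mult)
        moreover have "w \<star> v = (m - fst v, False)" using sv we True
          by (cases v) (simp add: dinf_mult_def)
        ultimately have "m - fst v = 0" using free_transl[OF x(1), of "m - fst v"] by auto
        then have "v = w" using sv we True by (cases v) simp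
        then have "g = (0, False) \<or> g = (m, True)" using conj_refl_eq v_def we True by simp
        then show "y \<in> {x, \<alpha> (m, True) x}" using g x by auto
      qed
      then have "finite (range (\<lambda>g. \<alpha> g x) \<inter> U)" by (rule finite_subset) simp
      then show False using orbit_inf[OF x(1) oU] by simp
    qed
  qed
qed

end


lemma dinv_eq_one[simp]: "dinv q \<star> p = (0, False) \<longleftrightarrow> p = q"
  by (cases p; cases q) (auto simp: dinf_mult_def dinv_def)

lemma conj_one: "dinv g \<star> h \<star> g = (0, False) \<Longrightarrow> h = (0, False)"
  by (cases g; cases h) (auto simp: dinf_mult_def dinv_def split: if_splits)

lemma continuous_map_locally:
  assumes "\<And>y. y \<in> topspace X \<Longrightarrow> \<exists>T g. openin X T \<and> y \<in> T \<and> continuous_map X Y g \<and> (\<forall>z\<in>T. f z = g z)"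
  shows "continuous_map X Y f"
  unfolding continuous_map_def
proof (intro conjI allI impI)
  show "f \<in> topspace X \<rightarrow> topspace Y"
  proof
    fix y assume y: "y \<in> topspace X"
    then obtain T g where T: "openin X T" "y \<in> T" "continuous_map X Y g" "\<forall>z\<in>T. f z = g z"
      using assms by blast
    have "g y \<in> topspace Y" using continuous_map_image_subset_topspace[OF T(3)] y by blast
    then show "f y \<in> topspace Y" using T(2,4) by simp
  qed
next
  fix V assume V: "openin Y V"
  show "openin X {x \<in> topspace X. f x \<in> V}"
  proof (subst openin_subopen, intro ballI)
    fix y assume "y \<in> {x \<in> topspace X. f x \<in> V}"
    then have y: "y \<in> topspace X" "f y \<in> V" by auto
    obtain T g where T: "openin X T" "y \<in> T" "continuous_map X Y g" "\<forall>z\<in>T. f z = g z"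
      using assms y(1) by blast
    define T' where "T' = T \<inter> {x \<in> topspace X. g x \<in> V}"
    have "openin X T'" unfolding T'_def using T openin_continuous_map_preimage[OF T(3) V] by blast
    moreover have "y \<in> T'" using T y by (auto simp: T'_def)
    moreover have "T' \<subseteq> {x \<in> topspace X. f x \<in> V}" using T by (auto simp: T'_def)
    ultimately show "\<exists>T. openin X T \<and> y \<in> T \<and> T \<subseteq> {x \<in> topspace X. f x \<in> V}" by blast
  qed
qed

locale coe = A: minact X \<alpha> + B: minact X \<beta>
  for X :: "'a topology" and \<alpha> \<beta> :: "int \<times> bool \<Rightarrow> 'a \<Rightarrow> 'a" +
  fixes \<phi> \<psi> :: "'a \<Rightarrow> 'a" and a b :: "int \<times> bool \<Rightarrow> 'a \<Rightarrow> int \<times> bool"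
  assumes hm: "homeomorphic_maps X X \<phi> \<psi>"
    and ac: "continuous_map (prod_topology (discrete_topology UNIV) X) (discrete_topology UNIV) (\<lambda>(g, x). a g x)"
    and bc: "continuous_map (prod_topology (discrete_topology UNIV) X) (discrete_topology UNIV) (\<lambda>(h, y). b h y)"
    and ae: "\<And>g x. x \<in> topspace X \<Longrightarrow> \<phi> (\<alpha> g x) = \<beta> (a g x) (\<phi> x)"
    and be: "\<And>h y. y \<in> topspace X \<Longrightarrow> \<psi> (\<beta> h y) = \<alpha> (b h y) (\<psi> y)"
begin

lemma phi_cont: "continuous_map X X \<phi>" using hm by (simp add: homeomorphic_maps_def)
lemma psi_cont: "continuous_map X X \<psi>" using hm by (simp add: homeomorphic_maps_def)
lemma phi_in[simp]: "x \<in> topspace X \<Longrightarrow> \<phi> x \<in> topspace X"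
  using phi_cont by (simp add: continuous_map_def Pi_iff)
lemma psi_in[simp]: "x \<in> topspace X \<Longrightarrow> \<psi> x \<in> topspace X"
  using psi_cont by (simp add: continuous_map_def Pi_iff)
lemma psi_phi[simp]: "x \<in> topspace X \<Longrightarrow> \<psi> (\<phi> x) = x" using hm by (simp add: homeomorphic_maps_def)
lemma phi_psi[simp]: "x \<in> topspace X \<Longrightarrow> \<phi> (\<psi> x) = x" using hm by (simp add: homeomorphic_maps_def)

lemma pair_cont: "continuous_map X (prod_topology (discrete_topology UNIV) X) (\<lambda>x. (g, x))"
  by (intro continuous_map_pairedI) (auto simp: continuous_map_id[unfolded id_def])

lemma a_cont: "continuous_map X (discrete_topology UNIV) (a g)"
proof -
  have "continuous_map X (discrete_topology UNIV) ((\<lambda>(g, x). a g x) \<circ> (\<lambda>x. (g, x)))"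
    by (rule continuous_map_compose[OF pair_cont ac])
  then show ?thesis by (simp add: o_def)
qed

lemma b_cont: "continuous_map X (discrete_topology UNIV) (b g)"
proof -
  have "continuous_map X (discrete_topology UNIV) ((\<lambda>(g, x). b g x) \<circ> (\<lambda>x. (g, x)))"
    by (rule continuous_map_compose[OF pair_cont bc])
  then show ?thesis by (simp add: o_def)
qed

lemma fin_img: "continuous_map X (discrete_topology UNIV) f \<Longrightarrow> finite (f ` topspace X)"
  using image_compactin[of X "topspace X" "discrete_topology UNIV" f] A.cpt
  by (simp add: compact_space_def compactin_discrete_topology)

lemma a_fin: "finite (a g ` topspace X)" using fin_img[OF a_cont] .
lemma b_fin: "finite (b g ` topspace X)" using fin_img[OF b_cont] .

definition fa :: "'a \<Rightarrow> bool" where "fa x \<longleftrightarrow> (\<forall>g. \<alpha> g x = x \<longrightarrow> g = (0, False))"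
definition fb :: "'a \<Rightarrow> bool" where "fb x \<longleftrightarrow> (\<forall>g. \<beta> g x = x \<longrightarrow> g = (0, False))"
definition FF :: "'a set" where "FF = {x \<in> topspace X. fa x \<and> fb (\<phi> x)}"

lemma fa_eq: assumes "fa z" "z \<in> topspace X" "\<alpha> p z = \<alpha> q z" shows "p = q"
proof -
  have "\<alpha> (dinv q \<star> p) z = z" using assms by (simp add: A.mult)
  then have "dinv q \<star> p = (0, False)" using assms(1) unfolding fa_def by blast
  then show ?thesis by simp
qed

lemma fb_eq: assumes "fb z" "z \<in> topspace X" "\<beta> p z = \<beta> q z" shows "p = q"
proof -
  have "\<beta> (dinv q \<star> p) z = z" using assms by (simp add: B.mult)
  then have "dinv q \<star> p = (0, False)" using assms(1) unfolding fb_def by blast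
  then show ?thesis by simp
qed

lemma cocycle:
  assumes x: "x \<in> topspace X" and f: "fb (\<phi> x)"
  shows "a (g' \<star> g) x = a g' (\<alpha> g x) \<star> a g x"
proof (rule fb_eq[OF f phi_in[OF x]])
  have "\<beta> (a (g' \<star> g) x) (\<phi> x) = \<phi> (\<alpha> (g' \<star> g) x)" using ae x by simp
  also have "\<dots> = \<phi> (\<alpha> g' (\<alpha> g x))" using x by (simp add: A.mult)
  also have "\<dots> = \<beta> (a g' (\<alpha> g x)) (\<phi> (\<alpha> g x))" using ae x by simp
  also have "\<dots> = \<beta> (a g' (\<alpha> g x)) (\<beta> (a g x) (\<phi> x))" using ae x by simp
  also have "\<dots> = \<beta> (a g' (\<alpha> g x) \<star> a g x) (\<phi> x)" using x by (simp add: B.mult)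
  finally show "\<beta> (a (g' \<star> g) x) (\<phi> x) = \<beta> (a g' (\<alpha> g x) \<star> a g x) (\<phi> x)" .
qed

lemma inv1: assumes "x \<in> FF" shows "b (a g x) (\<phi> x) = g"
proof -
  have x: "x \<in> topspace X" "fa x" using assms by (auto simp: FF_def)
  show ?thesis
  proof (rule fa_eq[OF x(2) x(1)])
    have "\<alpha> (b (a g x) (\<phi> x)) x = \<alpha> (b (a g x) (\<phi> x)) (\<psi> (\<phi> x))" using x by simp
    also have "\<dots> = \<psi> (\<beta> (a g x) (\<phi> x))" using be x by simp
    also have "\<dots> = \<psi> (\<phi> (\<alpha> g x))" using ae x by simp
    also have "\<dots> = \<alpha> g x" using x by simp
    finally show "\<alpha> (b (a g x) (\<phi> x)) x = \<alpha> g x" .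
  qed
qed

lemma inv2: assumes "x \<in> FF" shows "a (b p (\<phi> x)) x = p"
proof -
  have x: "x \<in> topspace X" "fb (\<phi> x)" using assms by (auto simp: FF_def)
  show ?thesis
  proof (rule fb_eq[OF x(2) phi_in[OF x(1)]])
    have "\<beta> (a (b p (\<phi> x)) x) (\<phi> x) = \<phi> (\<alpha> (b p (\<phi> x)) x)" using ae x by simp
    also have "\<dots> = \<phi> (\<alpha> (b p (\<phi> x)) (\<psi> (\<phi> x)))" using x by simp
    also have "\<dots> = \<phi> (\<psi> (\<beta> p (\<phi> x)))" using be x by simp
    also have "\<dots> = \<beta> p (\<phi> x)" using x by simp
    finally show "\<beta> (a (b p (\<phi> x)) x) (\<phi> x) = \<beta> p (\<phi> x)" .
  qed
qed

lemma fa_inv: assumes "x \<in> topspace X" "fa x" shows "fa (\<alpha> g x)"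
  unfolding fa_def
proof (intro allI impI)
  fix h assume "\<alpha> h (\<alpha> g x) = \<alpha> g x"
  then have "\<alpha> (dinv g \<star> h \<star> g) x = x" using assms by (simp add: A.mult)
  then have "dinv g \<star> h \<star> g = (0, False)" using assms unfolding fa_def by blast
  then show "h = (0, False)" by (rule conj_one)
qed

lemma fb_inv: assumes "x \<in> topspace X" "fb x" shows "fb (\<beta> g x)"
  unfolding fb_def
proof (intro allI impI)
  fix h assume "\<beta> h (\<beta> g x) = \<beta> g x"
  then have "\<beta> (dinv g \<star> h \<star> g) x = x" using assms by (simp add: B.mult)
  then have "dinv g \<star> h \<star> g = (0, False)" using assms unfolding fb_def by blast
  then show "h = (0, False)" by (rule conj_one)
qed

lemma FF_inv: "x \<in> FF \<Longrightarrow> \<alpha> g x \<in> FF"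
  unfolding FF_def using fa_inv fb_inv ae by auto

definition "Es = a (1, False) ` topspace X \<union> a (0, True) ` topspace X"
definition "M = Max (insert 0 ((\<lambda>e. \<bar>fst e\<bar>) ` Es))"
definition "Band = {p. 0 \<le> ht p \<and> ht p < M}"
definition "R0 = Max (insert 0 ((\<lambda>q. \<bar>ht q\<bar>) ` (\<Union>p\<in>Band. b p ` topspace X)))"

lemma Es_fin: "finite Es" by (simp add: Es_def a_fin)

lemma M_bound: "e \<in> Es \<Longrightarrow> \<bar>fst e\<bar> \<le> M"
  unfolding M_def using Es_fin by (intro Max_ge) auto

lemma Band_fin: "finite Band"
proof -
  have "Band \<subseteq> {g. \<bar>ht g\<bar> < M}" by (auto simp: Band_def)
  then show ?thesis using finite_strip finite_subset by blast
qed

lemma R0_bound: assumes "p \<in> Band" "y \<in> topspace X" shows "\<bar>ht (b p y)\<bar> \<le> R0"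
proof -
  have "\<bar>ht (b p y)\<bar> \<in> (\<lambda>q. \<bar>ht q\<bar>) ` (\<Union>p\<in>Band. b p ` topspace X)" using assms by blast
  then show ?thesis unfolding R0_def using Band_fin b_fin by (intro Max_ge) auto
qed

lemma R0_nn: "0 \<le> R0"
  unfolding R0_def using Band_fin b_fin by (intro Max_ge) auto

lemma strct_at: assumes x: "x \<in> FF" shows "strct (\<lambda>g. a g x) (\<lambda>p. b p (\<phi> x)) M R0"
proof
  have xt: "x \<in> topspace X" "fb (\<phi> x)" using x by (auto simp: FF_def)
  show "\<And>g. b (a g x) (\<phi> x) = g" using inv1[OF x] .
  show "\<And>p. a (b p (\<phi> x)) x = p" using inv2[OF x] .
  show "\<bar>ht (a (u \<star> g) x) - ht (a g x)\<bar> \<le> M" if u: "u \<in> {(1, False), (0, True)}" for g u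
  proof -
    have "a (u \<star> g) x = a u (\<alpha> g x) \<star> a g x" by (rule cocycle[OF xt])
    then have "\<bar>ht (a (u \<star> g) x) - ht (a g x)\<bar> = \<bar>fst (a u (\<alpha> g x))\<bar>" by (simp add: ht_left)
    moreover have "a u (\<alpha> g x) \<in> Es" using u xt by (auto simp: Es_def)
    ultimately show ?thesis using M_bound by simp
  qed
  show "\<bar>ht (b p (\<phi> x))\<bar> \<le> R0" if "0 \<le> ht p" "ht p < M" for p
    using R0_bound[of p "\<phi> x"] that xt by (simp add: Band_def)
  show "0 \<le> R0" by (rule R0_nn)
qed

definition KK :: "'a \<Rightarrow> (int \<times> bool) set" where "KK x = (\<lambda>g. a g x) -` Up 0"

lemma transfer:
  assumes x: "x \<in> FF" and g: "good j (KK x) c"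
  shows "good j (KK (\<alpha> g x)) (tau j g \<star> c \<star> dinv (a g x))"
proof -
  have xt: "x \<in> topspace X" "fb (\<phi> x)" using x by (auto simp: FF_def)
  interpret S: strct "\<lambda>g. a g x" "\<lambda>p. b p (\<phi> x)" M R0 by (rule strct_at[OF x])
  have e: "a g' (\<alpha> g x) = a (g' \<star> g) x \<star> dinv (a g x)" for g'
    using cocycle[OF xt, of g' g] by (simp add: dm_assoc)
  have "KK (\<alpha> g x) = (\<lambda>g'. a (g' \<star> g) x \<star> dinv (a g x)) -` Up 0"
    unfolding KK_def e ..
  then show ?thesis using good_transfer[OF S.bijP] g by (simp add: KK_def)
qed

definition "Wn = {g. \<bar>ht g\<bar> < R0 + 2} \<union> {(R0 + 2, False)}"
definition UU :: "'a \<Rightarrow> 'a set" where "UU y = {x \<in> topspace X. \<forall>g\<in>Wn. a g x = a g y}"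

lemma Wn_fin: "finite Wn" by (simp add: Wn_def finite_strip)

lemma UU_open: "openin X (UU y)"
proof -
  have op: "openin X {x \<in> topspace X. a g x = a g y}" for g
    using openin_continuous_map_preimage[OF a_cont, of "{a g y}" g] by simp
  have "UU y = \<Inter> ((\<lambda>g. {x \<in> topspace X. a g x = a g y}) ` Wn)"
    by (auto simp: UU_def Wn_def)
  moreover have "openin X (\<Inter> ((\<lambda>g. {x \<in> topspace X. a g x = a g y}) ` Wn))"
    by (rule openin_Inter) (use op Wn_fin in \<open>auto simp: Wn_def\<close>)
  ultimately show ?thesis by simp
qed

lemma UU_self: "y \<in> topspace X \<Longrightarrow> y \<in> UU y" by (simp add: UU_def)
lemma UU_same: "z \<in> UU y \<Longrightarrow> UU z = UU y" by (auto simp: UU_def)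

lemma window: assumes "x \<in> FF" "x' \<in> FF" "x' \<in> UU x" shows "KK x' = KK x"
proof -
  have "(\<lambda>g. a g x') -` Up 0 = (\<lambda>g. a g x) -` Up 0"
    by (rule strct_window[OF strct_at[OF assms(2)] strct_at[OF assms(1)]])
       (use assms(3) in \<open>auto simp: UU_def Wn_def\<close>)
  then show ?thesis by (simp add: KK_def)
qed

end


context coe begin

lemma FF_dense: "X closure_of FF = topspace X"
proof -
  define G1 where "G1 = (\<lambda>w. A.Fx w) ` (UNIV - {(0, False)})"
  define G2 where "G2 = (\<lambda>w. {x \<in> topspace X. \<beta> w (\<phi> x) = \<phi> x}) ` (UNIV - {(0, False)})"
  have cnt: "countable (G1 \<union> G2)" by (simp add: G1_def G2_def)
  have each: "closedin X T \<and> X interior_of T = {}" if T: "T \<in> G1 \<union> G2" for T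
  proof (cases "T \<in> G1")
    case True
    then obtain w where w: "w \<noteq> (0, False)" "T = A.Fx w" by (auto simp: G1_def)
    then show ?thesis using A.Fx_closed A.Fx_nowhere by simp
  next
    case False
    then obtain w where w: "w \<noteq> (0, False)" "T = {x \<in> topspace X. \<beta> w (\<phi> x) = \<phi> x}"
      using T by (auto simp: G2_def)
    have cl: "closedin X T"
      using closedin_continuous_maps_eq[OF A.hd continuous_map_compose[OF phi_cont B.cont[of w]] phi_cont]
      by (simp add: w o_def)
    have "X interior_of T = {}"
    proof -
      define V where "V = X interior_of T"
      have oV: "openin X V" and VT: "V \<subseteq> T" by (auto simp: V_def interior_of_subset)
      have "openin X (\<phi> ` V)"
        using homeomorphic_imp_open_map[OF homeomorphic_maps_imp_map[OF hm]] oV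
        by (simp add: open_map_def)
      moreover have "\<phi> ` V \<subseteq> B.Fx w" using VT by (auto simp: w B.Fx_def)
      ultimately have "\<phi> ` V \<subseteq> X interior_of B.Fx w" by (rule interior_of_maximal[rotated])
      then have "V = {}" using B.Fx_nowhere[OF w(1)] by simp
      then show ?thesis by (simp add: V_def)
    qed
    then show ?thesis using cl by simp
  qed
  have lc: "locally_compact_space X \<and> regular_space X"
    using compact_imp_locally_compact_space[OF A.cpt] compact_Hausdorff_imp_regular_space[OF A.cpt A.hd]
    by simp
  have I: "X interior_of \<Union>(G1 \<union> G2) = {}"
    by (rule Baire_category_alt) (use lc cnt each in auto)
  have "topspace X - FF \<subseteq> \<Union>(G1 \<union> G2)"
  proof
    fix x assume x: "x \<in> topspace X - FF"
    then have "\<not> fa x \<or> \<not> fb (\<phi> x)" by (auto simp: FF_def)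
    then show "x \<in> \<Union>(G1 \<union> G2)"
    proof
      assume "\<not> fa x"
      then obtain g where "\<alpha> g x = x" "g \<noteq> (0, False)" unfolding fa_def by blast
      then have "A.Fx g \<in> G1" "x \<in> A.Fx g" using x by (auto simp: G1_def A.Fx_def)
      then show ?thesis by blast
    next
      assume "\<not> fb (\<phi> x)"
      then obtain g where "\<beta> g (\<phi> x) = \<phi> x" "g \<noteq> (0, False)" unfolding fb_def by blast
      then have "{x \<in> topspace X. \<beta> g (\<phi> x) = \<phi> x} \<in> G2" "x \<in> {x \<in> topspace X. \<beta> g (\<phi> x) = \<phi> x}"
        using x by (auto simp: G2_def)
      then show ?thesis by blast
    qed
  qed
  then have "X interior_of (topspace X - FF) = {}" using I interior_of_mono by blast
  then show ?thesis by (simp add: closure_of_eq_topspace)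
qed

lemma FF_top: "x \<in> FF \<Longrightarrow> x \<in> topspace X" by (simp add: FF_def)

lemma FF_ne: "FF \<noteq> {}"
proof
  assume "FF = {}"
  then have "topspace X = {}" using FF_dense by simp
  then show False using A.infX by simp
qed

lemma ex_FU: assumes "y \<in> topspace X" shows "\<exists>x. x \<in> FF \<inter> UU y"
proof -
  have "UU y \<noteq> {}" using UU_self[OF assms] by blast
  then have "FF \<inter> UU y \<noteq> {}" using FF_dense UU_open unfolding dense_intersects_open by blast
  then show ?thesis by blast
qed

lemma exists_j: "\<exists>j. j \<in> {0, 1} \<and> (\<forall>x\<in>FF. \<exists>c. good j (KK x) c)"
proof -
  obtain x0 where x0: "x0 \<in> FF" using FF_ne by blast
  interpret S: strct "\<lambda>g. a g x0" "\<lambda>p. b p (\<phi> x0)" M R0 by (rule strct_at[OF x0])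
  obtain j c0 where j: "j \<in> {0, 1}" "good j (KK x0) c0"
    using S.struct_good unfolding S.K_def KK_def by blast
  have "\<exists>c. good j (KK x1) c" if x1: "x1 \<in> FF" for x1
  proof -
    have x1t: "x1 \<in> topspace X" using x1 by (rule FF_top)
    have "x0 \<in> UU x0" using UU_self[OF FF_top[OF x0]] .
    then obtain g where g: "\<alpha> g x1 \<in> UU x0" using A.hits[OF x1t UU_open] by blast
    have gF: "\<alpha> g x1 \<in> FF" using FF_inv x1 .
    then have "KK (\<alpha> g x1) = KK x0" using window x0 g by blast
    then have "good j (KK (\<alpha> g x1)) c0" using j by simp
    then have "good j (KK (\<alpha> (dinv g) (\<alpha> g x1))) (tau j (dinv g) \<star> c0 \<star> dinv (a (dinv g) (\<alpha> g x1)))"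
      using transfer[OF gF] by blast
    moreover have "\<alpha> (dinv g) (\<alpha> g x1) = x1" using x1t by simp
    ultimately show ?thesis
      by (intro exI[of _ "tau j (dinv g) \<star> c0 \<star> dinv (a (dinv g) (\<alpha> g x1))"]) simp
  qed
  then show ?thesis using j by blast
qed

definition "jj = (SOME j. j \<in> {0, 1} \<and> (\<forall>x\<in>FF. \<exists>c. good j (KK x) c))"

lemma jj: "jj \<in> {0, 1}" "x \<in> FF \<Longrightarrow> \<exists>c. good jj (KK x) c"
  using someI_ex[OF exists_j] unfolding jj_def[symmetric] by auto

definition "cc x = (THE c. good jj (KK x) c)"

lemma cc_eq: assumes "good jj (KK x) c" shows "cc x = c"
  unfolding cc_def by (rule the_equality[where P="\<lambda>c. good jj (KK x) c", OF assms]) (rule good_unique[OF _ assms])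

lemma cc_good: assumes "x \<in> FF" shows "good jj (KK x) (cc x)"
proof -
  obtain c where c: "good jj (KK x) c" using jj(2)[OF assms] by blast
  then show ?thesis using cc_eq[OF c] by simp
qed

lemma cc_transfer: "x \<in> FF \<Longrightarrow> cc (\<alpha> g x) = tau jj g \<star> cc x \<star> dinv (a g x)"
  by (rule cc_eq[OF transfer[OF _ cc_good]])

lemma cc_window: "x \<in> FF \<Longrightarrow> x' \<in> FF \<Longrightarrow> x' \<in> UU x \<Longrightarrow> cc x' = cc x"
  using window by (simp add: cc_def)

definition "CC y = cc (SOME x. x \<in> FF \<inter> UU y)"

lemma CC_FF: assumes "x \<in> FF" shows "CC x = cc x"
proof -
  have "(SOME x'. x' \<in> FF \<inter> UU x) \<in> FF \<inter> UU x" using someI_ex[OF ex_FU[OF FF_top[OF assms]]] .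
  then show ?thesis unfolding CC_def using cc_window assms by blast
qed

lemma CC_loc: "z \<in> UU y \<Longrightarrow> CC z = CC y"
  by (simp add: CC_def UU_same)

definition "phi' x = \<beta> (CC x) (\<phi> x)"

lemma CC_cont: "continuous_map X (discrete_topology UNIV) CC"
proof (rule continuous_map_locally)
  fix y assume y: "y \<in> topspace X"
  show "\<exists>T g. openin X T \<and> y \<in> T \<and> continuous_map X (discrete_topology UNIV) g \<and> (\<forall>z\<in>T. CC z = g z)"
    by (rule exI[of _ "UU y"], rule exI[of _ "\<lambda>_. CC y"]) (auto simp: UU_open UU_self[OF y] CC_loc)
qed

lemma phi'_cont: "continuous_map X X phi'"
proof (rule continuous_map_locally)
  fix y assume y: "y \<in> topspace X"
  have c: "continuous_map X X (\<lambda>x. \<beta> (CC y) (\<phi> x))"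
    using continuous_map_compose[OF phi_cont B.cont[of "CC y"]] by (simp add: o_def)
  show "\<exists>T g. openin X T \<and> y \<in> T \<and> continuous_map X X g \<and> (\<forall>z\<in>T. phi' z = g z)"
    by (rule exI[of _ "UU y"], rule exI[of _ "\<lambda>x. \<beta> (CC y) (\<phi> x)"])
       (auto simp: UU_open UU_self[OF y] CC_loc phi'_def c)
qed

lemma equi_FF: assumes x: "x \<in> FF" shows "phi' (\<alpha> g x) = \<beta> (tau jj g) (phi' x)"
proof -
  have xt: "x \<in> topspace X" using x by (rule FF_top)
  have "phi' (\<alpha> g x) = \<beta> (cc (\<alpha> g x)) (\<beta> (a g x) (\<phi> x))"
    using CC_FF[OF FF_inv[OF x]] ae[OF xt] by (simp add: phi'_def)
  also have "\<dots> = \<beta> (cc (\<alpha> g x) \<star> a g x) (\<phi> x)" using xt by (simp add: B.mult)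
  also have "cc (\<alpha> g x) \<star> a g x = tau jj g \<star> cc x" using cc_transfer[OF x] by (simp add: dm_assoc)
  also have "\<beta> (tau jj g \<star> cc x) (\<phi> x) = \<beta> (tau jj g) (phi' x)"
    using xt CC_FF[OF x] by (simp add: B.mult phi'_def)
  finally show ?thesis .
qed

lemma equi: assumes x: "x \<in> topspace X" shows "phi' (\<alpha> g x) = \<beta> (tau jj g) (phi' x)"
proof -
  have "(phi' \<circ> \<alpha> g) x = (\<beta> (tau jj g) \<circ> phi') x"
  proof (rule forall_in_closure_of_eq[of x X FF X])
    show "x \<in> X closure_of FF" using FF_dense x by simp
    show "Hausdorff_space X" by (rule A.hd)
    show "continuous_map X X (phi' \<circ> \<alpha> g)" by (rule continuous_map_compose[OF A.cont phi'_cont])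
    show "continuous_map X X (\<beta> (tau jj g) \<circ> phi')" by (rule continuous_map_compose[OF phi'_cont B.cont])
    show "\<And>x. x \<in> FF \<Longrightarrow> (phi' \<circ> \<alpha> g) x = (\<beta> (tau jj g) \<circ> phi') x" using equi_FF by simp
  qed
  then show ?thesis by simp
qed

lemma fa_dense: "X closure_of {x \<in> topspace X. fa x} = topspace X"
proof -
  have "FF \<subseteq> {x \<in> topspace X. fa x}" by (auto simp: FF_def)
  then have "X closure_of FF \<subseteq> X closure_of {x \<in> topspace X. fa x}" by (rule closure_of_mono)
  then have "topspace X \<subseteq> X closure_of {x \<in> topspace X. fa x}" using FF_dense by simp
  then show ?thesis using closure_of_subset_topspace[of X "{x \<in> topspace X. fa x}"] by (rule subset_antisym[rotated])
qed

lemma conj_data: "\<exists>C j. continuous_map X (discrete_topology UNIV) C \<and>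
   continuous_map X X (\<lambda>x. \<beta> (C x) (\<phi> x)) \<and>
   (\<forall>g. \<forall>x\<in>topspace X. \<beta> (C (\<alpha> g x)) (\<phi> (\<alpha> g x)) = \<beta> (tau j g) (\<beta> (C x) (\<phi> x)))"
proof -
  have e: "phi' = (\<lambda>x. \<beta> (CC x) (\<phi> x))" by (simp add: phi'_def fun_eq_iff)
  show ?thesis
  proof (intro exI conjI ballI allI)
    show "continuous_map X (discrete_topology UNIV) CC" by (rule CC_cont)
    show "continuous_map X X (\<lambda>x. \<beta> (CC x) (\<phi> x))" using phi'_cont by (simp add: e)
    fix g x assume "x \<in> topspace X"
    then show "\<beta> (CC (\<alpha> g x)) (\<phi> (\<alpha> g x)) = \<beta> (tau jj g) (\<beta> (CC x) (\<phi> x))"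
      using equi by (simp add: phi'_def)
  qed
qed

end


lemma tau_eq_one: "tau j g = (0, False) \<longleftrightarrow> g = (0, False)"
  by (cases g) (auto simp: tau_def)

lemma disc_const_open:
  assumes "continuous_map X (discrete_topology UNIV) f"
  shows "openin X {x \<in> topspace X. f x = c}"
  using openin_continuous_map_preimage[OF assms, of "{c}"] by simp

lemma disc_mult:
  assumes f: "continuous_map X (discrete_topology UNIV) f" and f': "continuous_map X (discrete_topology UNIV) f'"
  shows "continuous_map X (discrete_topology UNIV) (\<lambda>x. f x \<star> f' x)"
proof (rule continuous_map_locally[where f="\<lambda>x. f x \<star> f' x"])
  fix y assume y: "y \<in> topspace X"
  define T where "T = {x \<in> topspace X. f x = f y} \<inter> {x \<in> topspace X. f' x = f' y}"
  have o: "openin X T" unfolding T_def by (intro openin_Int disc_const_open[OF f] disc_const_open[OF f'])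
  have yT: "y \<in> T" using y by (simp add: T_def)
  have e: "\<forall>z\<in>T. f z \<star> f' z = f y \<star> f' y" by (simp add: T_def)
  have c: "continuous_map X (discrete_topology UNIV) (\<lambda>_. f y \<star> f' y)" by simp
  show "\<exists>T g. openin X T \<and> y \<in> T \<and> continuous_map X (discrete_topology UNIV) g \<and> (\<forall>z\<in>T. f z \<star> f' z = g z)"
    using o yT e c by blast
qed

theorem theorem1p2:
  fixes X :: "'a topology" and \<alpha> \<beta> :: "int \<times> bool \<Rightarrow> 'a \<Rightarrow> 'a"
  assumes "compact_space X" and "Hausdorff_space X" and "infinite (topspace X)"
    and "cont_action Dinf X \<alpha>" and "cont_action Dinf X \<beta>"
    and "minimal_action Dinf X \<alpha>" and "minimal_action Dinf X \<beta>"
    and "cont_orbit_equiv Dinf X \<alpha> Dinf X \<beta>"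
  shows "conjugate_actions Dinf X \<alpha> \<beta>"
proof -
  obtain \<phi> \<psi> a b where hm: "homeomorphic_maps X X \<phi> \<psi>"
    and ac: "continuous_map (prod_topology (discrete_topology (carrier Dinf)) X) (discrete_topology (carrier Dinf)) (\<lambda>(g, x). a g x)"
    and bc: "continuous_map (prod_topology (discrete_topology (carrier Dinf)) X) (discrete_topology (carrier Dinf)) (\<lambda>(h, y). b h y)"
    and ae0: "\<forall>g\<in>carrier Dinf. \<forall>x\<in>topspace X. \<phi> (\<alpha> g x) = \<beta> (a g x) (\<phi> x)"
    and be0: "\<forall>h\<in>carrier Dinf. \<forall>y\<in>topspace X. \<psi> (\<beta> h y) = \<alpha> (b h y) (\<psi> y)"
    using assms(8) unfolding cont_orbit_equiv_def by (elim exE conjE) (rule that; assumption)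
  have ae: "\<And>g x. x \<in> topspace X \<Longrightarrow> \<phi> (\<alpha> g x) = \<beta> (a g x) (\<phi> x)" using ae0 unfolding Dinf_simps ball_UNIV by blast
  have be: "\<And>h y. y \<in> topspace X \<Longrightarrow> \<psi> (\<beta> h y) = \<alpha> (b h y) (\<psi> y)" using be0 unfolding Dinf_simps ball_UNIV by blast
  note ac = ac[unfolded Dinf_simps] and bc = bc[unfolded Dinf_simps]
  interpret A: minact X \<alpha> using assms by (unfold_locales) auto
  interpret B: minact X \<beta> using assms by (unfold_locales) auto
  interpret C1: coe X \<alpha> \<beta> \<phi> \<psi> a b using hm ac bc ae be by (unfold_locales) auto
  interpret C2: coe X \<beta> \<alpha> \<psi> \<phi> b a using homeomorphic_maps_sym[of X X \<phi> \<psi>] hm ac bc ae be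
    by (unfold_locales) auto
  obtain C j where C: "continuous_map X (discrete_topology UNIV) C"
    and Cc: "continuous_map X X (\<lambda>x. \<beta> (C x) (\<phi> x))"
    and Ce: "\<And>g x. x \<in> topspace X \<Longrightarrow> \<beta> (C (\<alpha> g x)) (\<phi> (\<alpha> g x)) = \<beta> (tau j g) (\<beta> (C x) (\<phi> x))"
    using C1.conj_data by blast
  obtain C' j' where C': "continuous_map X (discrete_topology UNIV) C'"
    and Cc': "continuous_map X X (\<lambda>x. \<alpha> (C' x) (\<psi> x))"
    and Ce': "\<And>g x. x \<in> topspace X \<Longrightarrow> \<alpha> (C' (\<beta> g x)) (\<psi> (\<beta> g x)) = \<alpha> (tau j' g) (\<alpha> (C' x) (\<psi> x))"
    using C2.conj_data by blast
  define f where "f x = \<beta> (C x) (\<phi> x)" for x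
  define f' where "f' x = \<alpha> (C' x) (\<psi> x)" for x
  have fc: "continuous_map X X f" using Cc by (simp add: f_def[abs_def])
  have fin: "x \<in> topspace X \<Longrightarrow> f x \<in> topspace X" for x by (simp add: f_def)
  have fe: "x \<in> topspace X \<Longrightarrow> f (\<alpha> g x) = \<beta> (tau j g) (f x)" for g x using Ce by (simp add: f_def)
  have fe': "x \<in> topspace X \<Longrightarrow> f' (\<beta> g x) = \<alpha> (tau j' g) (f' x)" for g x using Ce' by (simp add: f'_def)
  define m where "m x = C' (f x) \<star> b (C x) (\<phi> x)" for x
  have th: "f' (f x) = \<alpha> (m x) x" if x: "x \<in> topspace X" for x
  proof -
    have "f' (f x) = \<alpha> (C' (f x)) (\<psi> (\<beta> (C x) (\<phi> x)))" by (simp add: f'_def f_def)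
    also have "\<dots> = \<alpha> (C' (f x)) (\<alpha> (b (C x) (\<phi> x)) x)" using be[of "\<phi> x" "C x"] x by simp
    also have "\<dots> = \<alpha> (m x) x" using x by (simp add: A.mult m_def)
    finally show ?thesis .
  qed
  have mc: "continuous_map X (discrete_topology UNIV) m"
  proof -
    have c1: "continuous_map X (discrete_topology UNIV) (\<lambda>x. C' (f x))"
      using continuous_map_compose[OF fc C'] by (simp add: o_def)
    have "continuous_map X (discrete_topology UNIV) ((\<lambda>(h, y). b h y) \<circ> (\<lambda>x. (C x, \<phi> x)))"
      by (rule continuous_map_compose[OF continuous_map_pairedI[OF C C1.phi_cont] bc])
    then have c2: "continuous_map X (discrete_topology UNIV) (\<lambda>x. b (C x) (\<phi> x))" by (simp add: o_def)
    show ?thesis unfolding m_def[abs_def] by (rule disc_mult[OF c1 c2])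
  qed
  define \<rho> where "\<rho> g = tau j' (tau j g)" for g
  have mid: "m (\<alpha> g x) \<star> g = \<rho> g \<star> m x" if x: "x \<in> topspace X" for g x
  proof -
    have "(\<lambda>x. m (\<alpha> g x) \<star> g) x = (\<lambda>x. \<rho> g \<star> m x) x"
    proof (rule forall_in_closure_of_eq[of x X "{x \<in> topspace X. C1.fa x}" "discrete_topology UNIV"])
      show "x \<in> X closure_of {x \<in> topspace X. C1.fa x}" using C1.fa_dense x by simp
      show "Hausdorff_space (discrete_topology UNIV)" by simp
      show "continuous_map X (discrete_topology UNIV) (\<lambda>x. m (\<alpha> g x) \<star> g)"
        using continuous_map_compose[OF continuous_map_compose[OF A.cont mc],
            of "discrete_topology UNIV" "\<lambda>p. p \<star> g"] by (simp add: o_def)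
      show "continuous_map X (discrete_topology UNIV) (\<lambda>x. \<rho> g \<star> m x)"
        using continuous_map_compose[OF mc, of "discrete_topology UNIV" "\<lambda>p. \<rho> g \<star> p"] by (simp add: o_def)
      fix z assume z: "z \<in> {x \<in> topspace X. C1.fa x}"
      then have zt: "z \<in> topspace X" and fz: "C1.fa z" by auto
      have "\<alpha> (m (\<alpha> g z) \<star> g) z = \<alpha> (m (\<alpha> g z)) (\<alpha> g z)" using zt by (simp add: A.mult)
      also have "\<dots> = f' (f (\<alpha> g z))" using th zt by simp
      also have "\<dots> = f' (\<beta> (tau j g) (f z))" using fe zt by simp
      also have "\<dots> = \<alpha> (\<rho> g) (f' (f z))" using fe' fin zt by (simp add: \<rho>_def)
      also have "\<dots> = \<alpha> (\<rho> g) (\<alpha> (m z) z)" using th zt by simp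
      also have "\<dots> = \<alpha> (\<rho> g \<star> m z) z" using zt by (simp add: A.mult)
      finally show "m (\<alpha> g z) \<star> g = \<rho> g \<star> m z" using C1.fa_eq[OF fz zt] by blast
    qed
    then show ?thesis by simp
  qed
  have inj: "inj_on f (topspace X)"
  proof (rule inj_onI)
    fix x1 x2 assume x1: "x1 \<in> topspace X" and x2: "x2 \<in> topspace X" and e: "f x1 = f x2"
    define g where "g = dinv (m x2) \<star> m x1"
    have "\<alpha> (m x1) x1 = f' (f x1)" using th[OF x1] by simp
    also have "\<dots> = f' (f x2)" using e by simp
    also have "\<dots> = \<alpha> (m x2) x2" using th[OF x2] by simp
    finally have "\<alpha> (m x1) x1 = \<alpha> (m x2) x2" .
    then have "\<alpha> (dinv (m x2)) (\<alpha> (m x1) x1) = x2" using x2 by simp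
    then have x2g: "x2 = \<alpha> g x1" using x1 by (simp add: g_def A.mult)
    have "m x2 \<star> g = \<rho> g \<star> m x1" using mid[OF x1, of g] x2g by simp
    moreover have "m x2 \<star> g = m x1" by (simp add: g_def dm_assoc[symmetric])
    ultimately have "\<rho> g \<star> m x1 = (0, False) \<star> m x1" by simp
    then have "\<rho> g = (0, False)" by (simp only: dm_cancel_r)
    then have "g = (0, False)" by (simp add: \<rho>_def tau_eq_one)
    then show "x1 = x2" using x2g x1 by simp
  qed
  have surj: "f ` topspace X = topspace X"
  proof
    show "f ` topspace X \<subseteq> topspace X" using fin by blast
    obtain x0 where x0: "x0 \<in> topspace X" using A.topspace_ne by blast
    have cl: "closedin X (f ` topspace X)"
      using compactin_imp_closedin[OF assms(2) image_compactin[OF _ fc]] assms(1)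
      by (simp add: compact_space_def)
    have "range (\<lambda>h. \<beta> h (f x0)) \<subseteq> f ` topspace X"
    proof
      fix y assume "y \<in> range (\<lambda>h. \<beta> h (f x0))"
      then obtain h where h: "y = \<beta> h (f x0)" by blast
      have "f (\<alpha> (tau (- j) h) x0) = \<beta> (tau j (tau (- j) h)) (f x0)" using fe x0 by simp
      then have "y = f (\<alpha> (tau (- j) h) x0)" using h by (simp add: tau_inv)
      then show "y \<in> f ` topspace X" using x0 by simp
    qed
    then have "X closure_of range (\<lambda>h. \<beta> h (f x0)) \<subseteq> f ` topspace X"
      using cl by (rule closure_of_minimal)
    then show "topspace X \<subseteq> f ` topspace X" using B.dense[OF fin[OF x0]] by simp
  qed
  have hmf: "homeomorphic_map X X f"
    by (rule continuous_imp_homeomorphic_map[OF fc assms(1) assms(2) surj inj])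
  show ?thesis unfolding conjugate_actions_def
    by (intro exI[of _ f] exI[of _ "tau j"] conjI hmf tau_iso ballI fe)
qed


end
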